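(* Let $G=(V,E)$ be an undirected, unweighted, 2-edge-connected graph and let $T$ be a spanning tree of $G$. Fix an edge $e$ of $T$, and let $X$ and $Y=V\setminus X$ be the vertex sets of the two connected components of $T-e$. Let $S_e$ be the set of swap edges of $e$; write every $g\in S_e$ as $g=(a,b)$ with $a\in X$, $b\in Y$. For $x\in X$ and $g=(a,b),g'=(a',b')\in S_e$ (not necessarily distinct) put $$\phi_x(g,g') := d_T(x,a)+d_T(b,b')+d_T(a',x).$$ For every $x\in X$ fix a pair $(g_x,g'_x)\in \arg\max_{(g,g')\in S_e\times S_e}\phi_x(g,g')$, and write $g_x=(a_x,b_x)$, $g'_x=(a'_x,b'_x)$ with $a_x,a'_x\in X$ and $b_x,b'_x\in Y$. Let $T_X$ be the subtree of $T$ induced by $X$, and for an edge $e'=(u,v)$ of $T_X$ let $U(e',u)$ and $U(e',v)$ denote the vertex sets of the connected components of $T_X-e'$ containing $u$ and $v$, respectively. Let $e'=(x,z)$ be an edge of $T_X$ such that $\phi_z(g_x,g'_x)<\phi_z(g_z,g'_z)$. Then at least one of the following holds: (i) $a_z,a'_z\in U(e',x)$ and $\{a_x,a'_x\}\cap U(e',z)\neq\emptyset$; (ii) $a_x,a'_x\in U(e',z)$ and $\{a_z,a'_z\}\cap U(e',x)\neq\emptyset$.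
   Context: $d_T(u,v)$ denotes the number of edges on the unique path between $u$ and $v$ in the tree $T$. For an edge $e$ of $T$, the set $S_e$ of swap edges of $e$ consists of all edges of $E\setminus\{e\}$ whose endpoints lie in different connected components of $T-e$. *)

theory Defs
  imports Main
begin

definition simple_graph :: "'a set \<Rightarrow> 'a set set \<Rightarrow> bool" where
  "simple_graph V E \<longleftrightarrow> finite V \<and>
     (\<forall>f\<in>E. \<exists>p q. f = {p, q} \<and> p \<noteq> q \<and> p \<in> V \<and> q \<in> V)"

definition adj :: "'a set set \<Rightarrow> 'a \<Rightarrow> 'a \<Rightarrow> bool" where
  "adj F p q \<longleftrightarrow> {p, q} \<in> F"

definition component :: "'a set set \<Rightarrow> 'a \<Rightarrow> 'a set" where
  "component F p = {q. (adj F)\<^sup>*\<^sup>* p q}"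

definition connected_on :: "'a set \<Rightarrow> 'a set set \<Rightarrow> bool" where
  "connected_on V F \<longleftrightarrow> (\<forall>p\<in>V. \<forall>q\<in>V. (adj F)\<^sup>*\<^sup>* p q)"

definition two_edge_connected :: "'a set \<Rightarrow> 'a set set \<Rightarrow> bool" where
  "two_edge_connected V E \<longleftrightarrow> connected_on V E \<and> (\<forall>f\<in>E. connected_on V (E - {f}))"

definition acyclic_graph :: "'a set set \<Rightarrow> bool" where
  "acyclic_graph F \<longleftrightarrow> \<not> (\<exists>vs. length vs \<ge> 3 \<and> distinct vs \<and>
      (\<forall>i < length vs. {vs ! i, vs ! ((i + 1) mod length vs)} \<in> F))"

definition spanning_tree :: "'a set \<Rightarrow> 'a set set \<Rightarrow> 'a set set \<Rightarrow> bool" where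
  "spanning_tree V E T \<longleftrightarrow> T \<subseteq> E \<and> connected_on V T \<and> acyclic_graph T"

definition dist :: "'a set set \<Rightarrow> 'a \<Rightarrow> 'a \<Rightarrow> nat" where
  "dist F p q = (LEAST n. (adj F ^^ n) p q)"

definition swap_pairs :: "'a set set \<Rightarrow> 'a set \<Rightarrow> 'a set \<Rightarrow> 'a set \<Rightarrow> ('a \<times> 'a) set" where
  "swap_pairs E e X Y = {(a, b). {a, b} \<in> E \<and> {a, b} \<noteq> e \<and> a \<in> X \<and> b \<in> Y}"

definition phi :: "'a set set \<Rightarrow> 'a \<Rightarrow> ('a \<times> 'a) \<times> ('a \<times> 'a) \<Rightarrow> nat" where
  "phi T x gg = (case gg of ((a, b), (a', b')) \<Rightarrow> dist T x a + dist T b b' + dist T a' x)"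

definition induced_edges :: "'a set set \<Rightarrow> 'a set \<Rightarrow> 'a set set" where
  "induced_edges T X = {f \<in> T. f \<subseteq> X}"

end

theory Submission
  imports Defs
begin

lemma adj_sym: "adj F p q = adj F q p"
  by (simp add: adj_def insert_commute)

lemma rt_sym: "(adj F)\<^sup>*\<^sup>* p q \<Longrightarrow> (adj F)\<^sup>*\<^sup>* q p"
proof (induction rule: rtranclp.induct)
  case (rtrancl_refl a) then show ?case by simp
next
  case (rtrancl_into_rtrancl a b c)
  then show ?case using adj_sym converse_rtranclp_into_rtranclp by metis
qed

lemma pow_sym: "(adj F ^^ n) p q \<Longrightarrow> (adj F ^^ n) q p"
proof (induction n arbitrary: p q)
  case 0 then show ?case by simp
next
  case (Suc n)
  then obtain y where "(adj F ^^ n) p y" "adj F y q" by (meson relpowp_Suc_E)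
  then show ?case using Suc.IH adj_sym relpowp_Suc_I2 by metis
qed

lemma dist_sym: "dist F p q = dist F q p"
  unfolding dist_def using pow_sym by metis

lemma cross:
  assumes "(adj F ^^ n) p q"
  shows "(adj (F - {{p,r}}))\<^sup>*\<^sup>* p q \<or> (\<exists>m<n. (adj F ^^ m) r q)"
  using assms
proof (induction n arbitrary: q)
  case 0 then show ?case by simp
next
  case (Suc n)
  then obtain y where y: "(adj F ^^ n) p y" "adj F y q" by (meson relpowp_Suc_E)
  from Suc.IH[OF y(1)] show ?case
  proof
    assume py: "(adj (F - {{p,r}}))\<^sup>*\<^sup>* p y"
    show ?thesis
    proof (cases "{y,q} = {p,r}")
      case True
      then have "q = p \<or> q = r" by (metis doubleton_eq_iff)
      then show ?thesis by auto
    next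
      case False
      then have "adj (F - {{p,r}}) y q" using y(2) by (simp add: adj_def)
      then show ?thesis using py by (meson rtranclp.rtrancl_into_rtrancl)
    qed
  next
    assume "\<exists>m<n. (adj F ^^ m) r y"
    then obtain m where "m < n" "(adj F ^^ m) r y" by blast
    then have "(adj F ^^ Suc m) r q" using y(2) by auto
    then show ?thesis using \<open>m < n\<close> by (metis Suc_less_eq)
  qed
qed

lemma path:
  "(R ^^ n) p q \<Longrightarrow> \<exists>vs. vs \<noteq> [] \<and> hd vs = p \<and> last vs = q \<and> distinct vs \<and>
     (\<forall>i. Suc i < length vs \<longrightarrow> R (vs!i) (vs!Suc i))"
proof (induction n arbitrary: q)
  case 0 then show ?case by (intro exI[of _ "[p]"]) auto
next
  case (Suc n)
  then obtain y where y: "(R ^^ n) p y" "R y q" by (meson relpowp_Suc_E)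
  from Suc.IH[OF y(1)] obtain vs where vs: "vs \<noteq> []" "hd vs = p" "last vs = y" "distinct vs"
     "\<forall>i. Suc i < length vs \<longrightarrow> R (vs!i) (vs!Suc i)" by blast
  show ?case
  proof (cases "q \<in> set vs")
    case True
    then obtain k where k: "k < length vs" "vs ! k = q" by (meson in_set_conv_nth)
    show ?thesis
      apply (intro exI[of _ "take (Suc k) vs"])
      using vs k by (auto simp: hd_take last_conv_nth min_def intro: arg_cong[where f="(!) vs"])
  next
    case False
    have "\<forall>i. Suc i < length (vs@[q]) \<longrightarrow> R ((vs@[q])!i) ((vs@[q])!Suc i)"
    proof (intro allI impI)
      fix i assume i: "Suc i < length (vs@[q])"
      show "R ((vs@[q])!i) ((vs@[q])!Suc i)"
      proof (cases "Suc i < length vs")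
        case True then show ?thesis using vs by (simp add: nth_append)
      next
        case False
        then have "i = length vs - 1" using i by simp
        then show ?thesis using vs y(2) False i by (simp add: nth_append last_conv_nth)
      qed
    qed
    then show ?thesis
      apply (intro exI[of _ "vs@[q]"]) using vs False by auto
  qed
qed

lemma noconn:
  assumes ac: "acyclic_graph F" and f: "{p,r} \<in> F" and ne: "p \<noteq> r"
  shows "\<not> (adj (F - {{p,r}}))\<^sup>*\<^sup>* p r"
proof
  assume "(adj (F - {{p,r}}))\<^sup>*\<^sup>* p r"
  then obtain n where "(adj (F - {{p,r}}) ^^ n) p r" by (meson rtranclp_power)
  from path[OF this] obtain vs where vs: "vs \<noteq> []" "hd vs = p" "last vs = r" "distinct vs"
     "\<forall>i. Suc i < length vs \<longrightarrow> adj (F - {{p,r}}) (vs!i) (vs!Suc i)" by blast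
  have h0: "vs ! 0 = p" using vs by (simp add: hd_conv_nth)
  have hl: "vs ! (length vs - 1) = r" using vs by (simp add: last_conv_nth)
  have "length vs \<noteq> 1" using h0 hl ne by auto
  moreover have "length vs \<noteq> 2"
  proof
    assume "length vs = 2"
    then have "adj (F - {{p,r}}) (vs!0) (vs!1)" using vs(5) by auto
    then show False using h0 hl \<open>length vs = 2\<close> by (simp add: adj_def)
  qed
  ultimately have len: "length vs \<ge> 3" using vs(1)
    by (metis One_nat_def Suc_1 le_less_Suc_eq length_greater_0_conv not_less_eq_eq numeral_3_eq_3 numeral_2_eq_2 Suc_leI linorder_not_less)
  have "\<forall>i < length vs. {vs ! i, vs ! ((i + 1) mod length vs)} \<in> F"
  proof (intro allI impI)
    fix i assume i: "i < length vs"
    show "{vs ! i, vs ! ((i + 1) mod length vs)} \<in> F"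
    proof (cases "Suc i < length vs")
      case True then show ?thesis using vs(5) by (auto simp: adj_def)
    next
      case False
      then have "i = length vs - 1" using i by simp
      then have "(i+1) mod length vs = 0" using i by (metis Suc_diff_1 Suc_eq_plus1 bot_nat_0.extremum_strict mod_self neq0_conv)
      then show ?thesis using h0 hl \<open>i = length vs - 1\<close> f by (simp add: insert_commute)
    qed
  qed
  then show False using ac len vs(4) unfolding acyclic_graph_def by blast
qed

lemma dist_side:
  assumes ac: "acyclic_graph T" and f: "{x,z} \<in> T" and ne: "x \<noteq> z"
    and xa: "(adj (T - {{x,z}}))\<^sup>*\<^sup>* x a"
  shows "dist T z a = dist T x a + 1"
proof -
  have xaT: "(adj T)\<^sup>*\<^sup>* x a" using xa by (rule rtranclp_mono[THEN predicate2D, rotated]) (auto simp: adj_def)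
  then obtain k where "(adj T ^^ k) x a" by (meson rtranclp_power)
  then have w1: "(adj T ^^ dist T x a) x a" unfolding dist_def by (rule LeastI)
  have "adj T z x" using f by (simp add: adj_def insert_commute)
  then have "(adj T ^^ Suc (dist T x a)) z a" using w1 relpowp_Suc_I2 by metis
  then have le: "dist T z a \<le> Suc (dist T x a)" unfolding dist_def by (rule Least_le)
  have w2: "(adj T ^^ dist T z a) z a" unfolding dist_def
    using \<open>(adj T ^^ Suc (dist T x a)) z a\<close> by (rule LeastI)
  from cross[OF w2, of x] show ?thesis
  proof
    assume "(adj (T - {{z,x}}))\<^sup>*\<^sup>* z a"
    moreover have "(adj (T - {{z,x}}))\<^sup>*\<^sup>* a x" using rt_sym[OF xa] by (simp add: insert_commute)
    ultimately have "(adj (T - {{z,x}}))\<^sup>*\<^sup>* z x" by simp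
    moreover have "{z,x} \<in> T" using f by (simp add: insert_commute)
    ultimately show ?thesis using noconn[OF ac] ne by metis
  next
    assume "\<exists>m<dist T z a. (adj T ^^ m) x a"
    then obtain m where "m < dist T z a" "(adj T ^^ m) x a" by blast
    then have "dist T x a \<le> m" unfolding dist_def by (simp add: Least_le)
    then show ?thesis using le \<open>m < dist T z a\<close> by simp
  qed
qed

lemma closure_X:
  assumes "(adj (T - {e}))\<^sup>*\<^sup>* p q" "p \<in> X" "X = component (T - {e}) u"
  shows "(adj (induced_edges T X))\<^sup>*\<^sup>* p q \<and> q \<in> X"
  using assms
proof (induction rule: rtranclp.induct)
  case (rtrancl_refl a) then show ?case by simp
next
  case (rtrancl_into_rtrancl a b c)
  then have b: "b \<in> X" "(adj (induced_edges T X))\<^sup>*\<^sup>* a b" by auto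
  then have "(adj (T - {e}))\<^sup>*\<^sup>* u b" using rtrancl_into_rtrancl.prems by (simp add: component_def)
  then have "(adj (T - {e}))\<^sup>*\<^sup>* u c" using rtrancl_into_rtrancl.hyps(2) by (meson rtranclp.rtrancl_into_rtrancl)
  then have c: "c \<in> X" using rtrancl_into_rtrancl.prems by (simp add: component_def)
  have "adj (induced_edges T X) b c" using rtrancl_into_rtrancl.hyps(2) b c
    by (auto simp: adj_def induced_edges_def)
  then show ?case using b c by (meson rtranclp.rtrancl_into_rtrancl)
qed

lemma side_cases:
  assumes "(adj F)\<^sup>*\<^sup>* x a"
  shows "(adj (F - {{x,z}}))\<^sup>*\<^sup>* x a \<or> (adj (F - {{x,z}}))\<^sup>*\<^sup>* z a"
proof -
  obtain k where "(adj F ^^ k) x a" using assms by (meson rtranclp_power)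
  then have w: "(adj F ^^ (LEAST n. (adj F ^^ n) x a)) x a" by (rule LeastI)
  from cross[OF w, of z] show ?thesis
  proof
    assume "\<exists>m<(LEAST n. (adj F ^^ n) x a). (adj F ^^ m) z a"
    then obtain m where m: "m < (LEAST n. (adj F ^^ n) x a)" "(adj F ^^ m) z a" by blast
    from cross[OF m(2), of x] show ?thesis
    proof
      assume "(adj (F - {{z,x}}))\<^sup>*\<^sup>* z a" then show ?thesis by (simp add: insert_commute)
    next
      assume "\<exists>m'<m. (adj F ^^ m') x a"
      then obtain m' where "m' < m" "(adj F ^^ m') x a" by blast
      then have "(LEAST n. (adj F ^^ n) x a) \<le> m'" by (simp add: Least_le)
      then show ?thesis using m(1) \<open>m' < m\<close> by simp
    qed
  qed simp
qed

theorem lemma1: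
  fixes V :: "'a set" and E T :: "'a set set" and u v x z :: 'a
    and X Y :: "'a set" and S :: "('a \<times> 'a) set" and TX :: "'a set set"
    and Ux Uz :: "'a set" and sel :: "'a \<Rightarrow> ('a \<times> 'a) \<times> ('a \<times> 'a)"
  assumes G: "simple_graph V E" and conn2: "two_edge_connected V E"
    and T: "spanning_tree V E T"
    and e: "{u, v} \<in> T"
    and X: "X = component (T - {{u, v}}) u"
    and Y: "Y = V - X"
    and S: "S = swap_pairs E {u, v} X Y"
    and sel: "\<forall>w\<in>X. sel w \<in> S \<times> S \<and> (\<forall>p\<in>S \<times> S. phi T w p \<le> phi T w (sel w))"
    and TX: "TX = induced_edges T X"
    and e': "{x, z} \<in> TX"
    and Ux: "Ux = component (TX - {{x, z}}) x"
    and Uz: "Uz = component (TX - {{x, z}}) z"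
    and lt: "phi T z (sel x) < phi T z (sel z)"
  shows "(fst (fst (sel z)) \<in> Ux \<and> fst (snd (sel z)) \<in> Ux \<and>
            (fst (fst (sel x)) \<in> Uz \<or> fst (snd (sel x)) \<in> Uz))
       \<or> (fst (fst (sel x)) \<in> Uz \<and> fst (snd (sel x)) \<in> Uz \<and>
            (fst (fst (sel z)) \<in> Ux \<or> fst (snd (sel z)) \<in> Ux))"
proof -
  have ac: "acyclic_graph T" and TE: "T \<subseteq> E" using T by (auto simp: spanning_tree_def)
  have fT: "{x,z} \<in> T" and xX: "x \<in> X" and zX: "z \<in> X" using e' TX by (auto simp: induced_edges_def)
  have ne: "x \<noteq> z"
  proof -
    from G fT TE obtain p q where "{x,z} = {p,q}" "p \<noteq> q" unfolding simple_graph_def by blast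
    then show ?thesis by (metis doubleton_eq_iff)
  qed
  have TXsub: "TX - {{x,z}} \<subseteq> T - {{x,z}}" using TX by (auto simp: induced_edges_def)
  have mono: "(adj (TX - {{x,z}}))\<^sup>*\<^sup>* p q \<Longrightarrow> (adj (T - {{x,z}}))\<^sup>*\<^sup>* p q" for p q
    by (rule rtranclp_mono[THEN predicate2D, rotated]) (use TXsub in \<open>auto simp: adj_def\<close>)
  have fact: "(a \<in> Ux \<or> a \<in> Uz) \<and> (a \<in> Ux \<longrightarrow> dist T z a = dist T x a + 1)
      \<and> (a \<in> Uz \<longrightarrow> dist T x a = dist T z a + 1)" if aX: "a \<in> X" for a
  proof (intro conjI impI)
    have "(adj (T - {{u,v}}))\<^sup>*\<^sup>* u x" "(adj (T - {{u,v}}))\<^sup>*\<^sup>* u a"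
      using xX aX X by (auto simp: component_def)
    then have "(adj (T - {{u,v}}))\<^sup>*\<^sup>* x a" using rt_sym by (metis rtranclp_trans)
    then have "(adj TX)\<^sup>*\<^sup>* x a" using closure_X[OF _ xX X] TX by blast
    from side_cases[OF this, of z] show "a \<in> Ux \<or> a \<in> Uz"
      using Ux Uz by (auto simp: component_def)
  next
    assume "a \<in> Ux"
    then show "dist T z a = dist T x a + 1"
      using dist_side[OF ac fT ne] mono Ux by (auto simp: component_def)
  next
    assume "a \<in> Uz"
    then have "(adj (T - {{z,x}}))\<^sup>*\<^sup>* z a" using mono Uz by (auto simp: component_def insert_commute)
    then show "dist T x a = dist T z a + 1"
      using dist_side[OF ac _ ne[symmetric]] fT by (simp add: insert_commute)
  qed
  obtain ax bx ax' bx' where sx: "sel x = ((ax,bx),(ax',bx'))" by (metis prod.exhaust)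
  obtain az bz az' bz' where sz: "sel z = ((az,bz),(az',bz'))" by (metis prod.exhaust)
  have inS: "sel x \<in> S \<times> S" "sel z \<in> S \<times> S" using sel xX zX by auto
  have mx: "phi T x (sel z) \<le> phi T x (sel x)" using bspec[OF sel xX] inS(2) by (meson conjunct2 bspec)
  have inX: "ax \<in> X" "ax' \<in> X" "az \<in> X" "az' \<in> X"
    using inS sx sz S by (auto simp: swap_pairs_def)
  note f1 = fact[OF inX(1)] and f2 = fact[OF inX(2)] and f3 = fact[OF inX(3)] and f4 = fact[OF inX(4)]
  have lt': "dist T z ax + dist T bx bx' + dist T z ax' < dist T z az + dist T bz bz' + dist T z az'"
    using lt sx sz by (simp add: phi_def dist_sym[of T _ z])
  have mx': "dist T x az + dist T bz bz' + dist T x az' \<le> dist T x ax + dist T bx bx' + dist T x ax'"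
    using mx sx sz by (simp add: phi_def dist_sym[of T _ x])
  show ?thesis unfolding sx sz fst_conv snd_conv
    using f1 f2 f3 f4 lt' mx' by linarith
qed

end
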